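(* Let $n\ge2$, $m\ge0$ and $p$ be fixed integers with $0\le p\le 2n+\lfloor m/2\rfloor-3$. Then there is a polynomial $\beta_p(j)$ in $j$ of degree at most $2(2n+\lfloor m/2\rfloor-3-p)$ such that for every integer $j$ with $1\le j\le n-1$, the coefficient of $x^p$ in $$(2x+m+1)_j\,(x-j+2)_{\lfloor m/2\rfloor+j-1}\,(x+m+2j+1)_{2n-2j-2}$$ equals $2^j\beta_p(j)$.
   Context: $(a)_k:=a(a+1)\cdots(a+k-1)$ for $k\ge1$, $(a)_0:=1$. *)

theory Defs
  imports "HOL-Computational_Algebra.Polynomial"
begin

end

theory Submission imports Defs begin

definition pf :: "nat set \<Rightarrow> nat \<Rightarrow> (nat \<Rightarrow> rat) \<Rightarrow> bool" where
  "pf S d f \<longleftrightarrow> (\<exists>r::rat poly. degree r \<le> d \<and> (\<forall>j\<in>S. f j = poly r (of_nat j)))"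

lemma pf_const: "pf S 0 (\<lambda>_. c)"
  unfolding pf_def by (rule exI[of _ "[:c:]"]) simp

lemma pf_id: "pf S 1 (\<lambda>j. of_nat j)"
  unfolding pf_def by (rule exI[of _ "[:0,1:]"]) simp

lemma pf_mono: "pf S d f \<Longrightarrow> d \<le> d' \<Longrightarrow> pf S d' f"
  unfolding pf_def by (meson order_trans)

lemma pf_add: "pf S d f \<Longrightarrow> pf S d g \<Longrightarrow> pf S d (\<lambda>j. f j + g j)"
  unfolding pf_def
proof (elim exE conjE)
  fix r s assume "degree r \<le> d" "\<forall>j\<in>S. f j = poly r (of_nat j)" "degree s \<le> d" "\<forall>j\<in>S. g j = poly s (of_nat j)"
  then show "\<exists>r. degree r \<le> d \<and> (\<forall>j\<in>S. f j + g j = poly r (of_nat j))"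
    by (intro exI[of _ "r + s"]) (auto intro: order_trans[OF degree_add_le_max])
qed

lemma pf_mult: "pf S d1 f \<Longrightarrow> pf S d2 g \<Longrightarrow> pf S (d1 + d2) (\<lambda>j. f j * g j)"
  unfolding pf_def
proof (elim exE conjE)
  fix r s assume "degree r \<le> d1" "\<forall>j\<in>S. f j = poly r (of_nat j)" "degree s \<le> d2" "\<forall>j\<in>S. g j = poly s (of_nat j)"
  then show "\<exists>r. degree r \<le> d1 + d2 \<and> (\<forall>j\<in>S. f j * g j = poly r (of_nat j))"
    by (intro exI[of _ "r * s"]) (auto intro: order_trans[OF degree_mult_le])
qed

lemma pf_cmult: "pf S d f \<Longrightarrow> pf S d (\<lambda>j. c * f j)"
  using pf_mult[OF pf_const[of S c]] by simp

lemma pf_neg: "pf S d f \<Longrightarrow> pf S d (\<lambda>j. - f j)"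
  using pf_cmult[of S d f "-1"] by simp

lemma pf_diff: "pf S d f \<Longrightarrow> pf S d g \<Longrightarrow> pf S d (\<lambda>j. f j - g j)"
  using pf_add[OF _ pf_neg, of S d f g] by simp

lemma pf_sum: "finite A \<Longrightarrow> (\<And>a. a \<in> A \<Longrightarrow> pf S d (f a)) \<Longrightarrow> pf S d (\<lambda>j. \<Sum>a\<in>A. f a j)"
proof (induction A rule: finite_induct)
  case empty then show ?case using pf_mono[OF pf_const[of S 0]] by simp
next
  case (insert x F) then show ?case using pf_add[of S d "f x" "\<lambda>j. \<Sum>a\<in>F. f a j"] by simp
qed

lemma pf_power: "pf S d f \<Longrightarrow> pf S (d * e) (\<lambda>j. f j ^ e)"
proof (induction e)
  case 0 then show ?case using pf_const[of S 1] by simp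
next
  case (Suc e) then show ?case using pf_mult[of S d f "d*e" "\<lambda>j. f j ^ e"] by simp
qed

lemma pf_compose:
  fixes a b :: rat
  assumes "pf UNIV d g" "\<forall>j\<in>S. of_nat (L j) = a + b * of_nat j"
  shows "pf S d (\<lambda>j. g (L j))"
proof -
  obtain r where r: "degree r \<le> d" "\<forall>j. g j = poly r (of_nat j)" using assms(1) unfolding pf_def by auto
  have "degree (pcompose r [:a,b:]) \<le> d"
    using r(1) by (simp add: degree_pcompose)
  moreover have "\<forall>j\<in>S. g (L j) = poly (pcompose r [:a,b:]) (of_nat j)"
    using r(2) assms(2) by (simp add: poly_pcompose mult.commute)
  ultimately show ?thesis unfolding pf_def by blast
qed

lemma powsum_identity:
  "(of_nat L :: rat) ^ Suc d = (\<Sum>e\<le>d. of_nat (Suc d choose e) * (\<Sum>i<L. of_nat i ^ e))"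
proof -
  have "(of_nat L :: rat) ^ Suc d = (\<Sum>i<L. of_nat (Suc i) ^ Suc d - of_nat i ^ Suc d)"
    using sum_lessThan_telescope[of "\<lambda>i. (of_nat i :: rat) ^ Suc d" L] by simp
  also have "\<dots> = (\<Sum>i<L. \<Sum>e\<le>d. of_nat (Suc d choose e) * of_nat i ^ e)"
  proof (rule sum.cong[OF refl])
    fix i
    have "(of_nat (Suc i) :: rat) ^ Suc d = (of_nat i + 1) ^ Suc d" by (simp add: add.commute)
    also have "\<dots> = (\<Sum>k\<le>Suc d. of_nat (Suc d choose k) * of_nat i ^ k * 1 ^ (Suc d - k))"
      by (rule binomial_ring)
    also have "\<dots> = (\<Sum>e\<le>d. of_nat (Suc d choose e) * of_nat i ^ e) + of_nat i ^ Suc d"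
      by (simp add: sum.atMost_Suc)
    finally show "(of_nat (Suc i) :: rat) ^ Suc d - of_nat i ^ Suc d = (\<Sum>e\<le>d. of_nat (Suc d choose e) * of_nat i ^ e)"
      by simp
  qed
  also have "\<dots> = (\<Sum>e\<le>d. of_nat (Suc d choose e) * (\<Sum>i<L. of_nat i ^ e))"
    by (subst sum.swap) (simp add: sum_distrib_left)
  finally show ?thesis .
qed

lemma pf_powsum: "pf UNIV (Suc d) (\<lambda>L. \<Sum>i<L. (of_nat i :: rat) ^ d)"
proof (induction d rule: less_induct)
  case (less d)
  define S where "S = (\<lambda>e L. \<Sum>i<L. (of_nat i :: rat) ^ e)"
  have eq: "S d L = (1 / of_nat (Suc d)) * (of_nat L ^ Suc d - (\<Sum>e<d. of_nat (Suc d choose e) * S e L))" for L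
  proof -
    have "(of_nat L :: rat) ^ Suc d = (\<Sum>e<d. of_nat (Suc d choose e) * S e L) + of_nat (Suc d) * S d L"
      unfolding powsum_identity S_def by (simp add: lessThan_Suc_atMost[symmetric])
    then show ?thesis by (simp add: field_simps)
  qed
  have "pf UNIV (Suc d) (\<lambda>L. (1 / of_nat (Suc d)) * (of_nat L ^ Suc d - (\<Sum>e<d. of_nat (Suc d choose e) * S e L)))"
  proof (rule pf_cmult, rule pf_diff)
    show "pf UNIV (Suc d) (\<lambda>L. (of_nat L :: rat) ^ Suc d)"
      using pf_power[OF pf_id, of UNIV "Suc d"] by simp
    show "pf UNIV (Suc d) (\<lambda>L. \<Sum>e<d. of_nat (Suc d choose e) * S e L)"
    proof (rule pf_sum)
      fix e assume "e \<in> {..<d}"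
      then have "pf UNIV (Suc e) (S e)" using less unfolding S_def by auto
      then show "pf UNIV (Suc d) (\<lambda>L. of_nat (Suc d choose e) * S e L)"
        using \<open>e \<in> {..<d}\<close> by (intro pf_cmult) (auto elim: pf_mono)
    qed simp
  qed
  then show ?case using eq unfolding S_def by simp
qed

lemma pf_faulhaber:
  assumes "pf UNIV d f"
  shows "pf UNIV (Suc d) (\<lambda>L. \<Sum>i<L. f i)"
proof -
  obtain r where r: "degree r \<le> d" "\<forall>j. f j = poly r (of_nat j)" using assms unfolding pf_def by auto
  have eq: "(\<Sum>i<L. f i) = (\<Sum>e\<le>degree r. coeff r e * (\<Sum>i<L. (of_nat i :: rat) ^ e))" for L
  proof -
    have "(\<Sum>i<L. f i) = (\<Sum>i<L. \<Sum>e\<le>degree r. coeff r e * (of_nat i :: rat) ^ e)"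
      using r(2) by (simp add: poly_altdef)
    also have "\<dots> = (\<Sum>e\<le>degree r. \<Sum>i<L. coeff r e * (of_nat i :: rat) ^ e)"
      by (rule sum.swap)
    finally show ?thesis by (simp add: sum_distrib_left)
  qed
  have "pf UNIV (Suc d) (\<lambda>L. \<Sum>e\<le>degree r. coeff r e * (\<Sum>i<L. (of_nat i :: rat) ^ e))"
  proof (intro pf_sum pf_cmult)
    fix e assume "e \<in> {..degree r}"
    then show "pf UNIV (Suc d) (\<lambda>L. \<Sum>i<L. (of_nat i :: rat) ^ e)"
      using pf_powsum[of e] r(1) by (auto elim: pf_mono)
  qed simp
  then show ?thesis using eq by simp
qed

definition R :: "rat \<Rightarrow> rat \<Rightarrow> nat \<Rightarrow> rat poly" where
  "R A \<delta> L = (\<Prod>i<L. [:1, A + of_nat i * \<delta>:])"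

lemma coeff_mult_lin0: "coeff (p * [:1, c:]) 0 = coeff (p::rat poly) 0"
  by (simp add: mult.commute[of p] mult_pCons_left)

lemma coeff_mult_linS: "coeff (p * [:1, c:]) (Suc k) = coeff (p::rat poly) (Suc k) + c * coeff p k"
  by (simp add: mult.commute[of p] mult_pCons_left)

lemma R_Suc: "R A \<delta> (Suc L) = R A \<delta> L * [:1, A + of_nat L * \<delta>:]"
  unfolding R_def by (simp add: lessThan_Suc)

lemma R_coeff0: "coeff (R A \<delta> L) 0 = 1"
  by (induction L) (simp_all add: R_Suc coeff_mult_lin0, simp add: R_def)

lemma R_rec: "coeff (R A \<delta> L) (Suc k) = (\<Sum>i<L. (A + of_nat i * \<delta>) * coeff (R A \<delta> i) k)"
  by (induction L) (simp_all add: R_Suc coeff_mult_linS, simp add: R_def)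

lemma pf_R: "pf UNIV (2 * k) (\<lambda>L. coeff (R A \<delta> L) k)"
proof (induction k)
  case 0 then show ?case using pf_const[of UNIV 1] by (simp add: R_coeff0)
next
  case (Suc k)
  have lin: "pf UNIV 1 (\<lambda>i. A + of_nat i * \<delta>)"
    using pf_add[OF pf_mono[OF pf_const[of UNIV A]] pf_mult[OF pf_id pf_const[of UNIV \<delta>]]] by simp
  have "pf UNIV (Suc (2 * k)) (\<lambda>i. (A + of_nat i * \<delta>) * coeff (R A \<delta> i) k)"
    using pf_mult[OF lin Suc.IH] by simp
  from pf_faulhaber[OF this] show ?case by (simp add: R_rec)
qed

definition good :: "nat set \<Rightarrow> (nat \<Rightarrow> rat poly) \<Rightarrow> bool" where
  "good S F \<longleftrightarrow> (\<forall>k. pf S (2 * k) (\<lambda>j. coeff (reflect_poly (F j)) k))"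

lemma pf_cong: "pf S d f \<Longrightarrow> (\<And>j. j \<in> S \<Longrightarrow> f j = g j) \<Longrightarrow> pf S d g"
  unfolding pf_def by auto

lemma good_cong:
  assumes "good S F" "\<And>j. j \<in> S \<Longrightarrow> F j = G j" shows "good S G"
  unfolding good_def
proof
  fix k show "pf S (2 * k) (\<lambda>j. coeff (reflect_poly (G j)) k)"
    using pf_cong[of S "2*k" "\<lambda>j. coeff (reflect_poly (F j)) k"] assms unfolding good_def by auto
qed

lemma good_mult:
  assumes "good S F" "good S G"
  shows "good S (\<lambda>j. F j * G j)"
  unfolding good_def
proof
  fix k
  have "pf S (2 * k) (\<lambda>j. \<Sum>a\<le>k. coeff (reflect_poly (F j)) a * coeff (reflect_poly (G j)) (k - a))"
  proof (rule pf_sum)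
    fix a assume "a \<in> {..k}"
    then have "2 * a + 2 * (k - a) = 2 * k" by auto
    then show "pf S (2 * k) (\<lambda>j. coeff (reflect_poly (F j)) a * coeff (reflect_poly (G j)) (k - a))"
      using pf_mult[of S "2*a" _ "2*(k-a)"] assms unfolding good_def by metis
  qed simp
  then show "pf S (2 * k) (\<lambda>j. coeff (reflect_poly (F j * G j)) k)"
    by (simp add: reflect_poly_mult coeff_mult)
qed

lemma reflect_lin: "reflect_poly [:c, 1:] = [:1, c::rat:]"
  by (simp add: reflect_poly_def)

lemma good_R:
  fixes a b :: rat
  assumes "\<forall>j\<in>S. of_nat (L j) = a + b * of_nat j"
  shows "good S (\<lambda>j. \<Prod>i<L j. [:A + of_nat i * \<delta>, 1:])"
  unfolding good_def
proof
  fix k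
  have "pf S (2 * k) (\<lambda>j. coeff (R A \<delta> (L j)) k)"
    by (rule pf_compose[OF pf_R assms])
  then show "pf S (2 * k) (\<lambda>j. coeff (reflect_poly (\<Prod>i<L j. [:A + of_nat i * \<delta>, 1:])) k)"
    by (simp add: reflect_poly_prod reflect_lin R_def)
qed

lemma degree_lin_prod: "degree (\<Prod>i<L. [:c i, 1::rat:]) = L \<and> (\<Prod>i<L. [:c i, 1::rat:]) \<noteq> 0"
proof (induction L)
  case 0 then show ?case by simp
next
  case (Suc L)
  define P where "P = (\<Prod>i<L. [:c i, 1::rat:])"
  have "(\<Prod>i<Suc L. [:c i, 1::rat:]) = P * [:c L, 1:]" unfolding P_def by (simp add: lessThan_Suc)
  moreover have "degree (P * [:c L, 1:]) = Suc L" using Suc unfolding P_def[symmetric]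
    by (subst degree_mult_eq) auto
  moreover have "P * [:c L, 1:] \<noteq> 0" using Suc unfolding P_def[symmetric] by (simp only: mult_eq_0_iff) auto
  ultimately show ?case by simp
qed

lemma prod_smult_lt: "(\<Prod>i<n. smult c (f i)) = smult (c ^ n) (\<Prod>i<n. f i :: rat poly)"
  by (induction n) (simp_all add: lessThan_Suc mult_ac)

theorem lemmaA9:
  fixes n m p :: nat
  assumes "n \<ge> 2" and "p \<le> 2*n + m div 2 - 3"
  shows "\<exists>\<beta> :: rat poly.
           degree \<beta> \<le> 2 * (2*n + m div 2 - 3 - p) \<and>
           (\<forall>j. 1 \<le> j \<and> j \<le> n - 1 \<longrightarrow>
              coeff (pochhammer [:of_nat m + 1, 2:] j
                     * pochhammer [:2 - of_nat j, 1:] (m div 2 + j - 1)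
                     * pochhammer [:of_nat m + 2 * of_nat j + 1, 1:] (2*n - 2*j - 2)) p
              = 2 ^ j * poly \<beta> (of_nat j))"
proof -
  define M where "M = m div 2"
  define N where "N = 2*n + M - 3"
  define S where "S = {j. 1 \<le> j \<and> j \<le> n - 1}"
  define F1 where "F1 = (\<lambda>j. \<Prod>i<j. [:(of_nat m + 1) / 2 + of_nat i * (1/2), 1::rat:])"
  define F2 where "F2 = (\<lambda>j. \<Prod>i<M + j - 1. [:of_nat M + of_nat i * (-1), 1::rat:])"
  define F3 where "F3 = (\<lambda>j. \<Prod>i<2*n - 2*j - 2. [:(of_nat m + 2 * of_nat n - 2) + of_nat i * (-1), 1::rat:])"
  define G where "G = (\<lambda>j. F1 j * F2 j * F3 j)"
  have g1: "good S F1" unfolding F1_def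
    by (rule good_R[of S _ 0 1]) simp
  have g2: "good S F2" unfolding F2_def
    by (rule good_R[of S _ "of_nat M - 1" 1]) (auto simp: S_def of_nat_diff)
  have g3: "good S F3" unfolding F3_def
    by (rule good_R[of S _ "2 * of_nat n - 2" "-2"]) (auto simp: S_def of_nat_diff)
  have gG: "good S G" unfolding G_def by (intro good_mult g1 g2 g3)
  have P1: "pochhammer [:of_nat m + 1, 2:] j = smult (2 ^ j) (F1 j)" for j
  proof -
    have "pochhammer [:of_nat m + 1, 2:] j = (\<Prod>i<j. smult 2 [:(of_nat m + 1) / 2 + of_nat i * (1/2), 1::rat:])"
      unfolding pochhammer_prod atLeast0LessThan
      by (rule prod.cong) (simp_all add: of_nat_poly)
    then show ?thesis unfolding F1_def prod_smult_lt .
  qed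
  have P2: "pochhammer [:2 - of_nat j, 1:] (M + j - 1) = F2 j" if "j \<in> S" for j
  proof -
    have "pochhammer [:2 - of_nat j, 1:] (M + j - 1) = (\<Prod>i<M + j - 1. [:2 - of_nat j, 1::rat:] + of_nat (M + j - 1 - Suc i))"
      unfolding pochhammer_prod atLeast0LessThan by (rule prod.nat_diff_reindex[symmetric])
    also have "\<dots> = F2 j" unfolding F2_def
      by (rule prod.cong) (use that in \<open>auto simp: of_nat_poly S_def of_nat_diff\<close>)
    finally show ?thesis .
  qed
  have P3: "pochhammer [:of_nat m + 2 * of_nat j + 1, 1:] (2*n - 2*j - 2) = F3 j" if "j \<in> S" for j
  proof -
    have "pochhammer [:of_nat m + 2 * of_nat j + 1, 1:] (2*n - 2*j - 2) = (\<Prod>i<2*n - 2*j - 2. [:of_nat m + 2 * of_nat j + 1, 1::rat:] + of_nat (2*n - 2*j - 2 - Suc i))"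
      unfolding pochhammer_prod atLeast0LessThan by (rule prod.nat_diff_reindex[symmetric])
    also have "\<dots> = F3 j" unfolding F3_def
      by (rule prod.cong) (use that in \<open>auto simp: of_nat_poly S_def of_nat_diff\<close>)
    finally show ?thesis .
  qed
  have degG: "degree (G j) = N" if "j \<in> S" for j
  proof -
    have "degree (F1 j) = j" "F1 j \<noteq> 0" using degree_lin_prod unfolding F1_def by auto
    moreover have "degree (F2 j) = M + j - 1" "F2 j \<noteq> 0" using degree_lin_prod unfolding F2_def by auto
    moreover have "degree (F3 j) = 2*n - 2*j - 2" "F3 j \<noteq> 0" using degree_lin_prod unfolding F3_def by auto
    ultimately show ?thesis unfolding G_def N_def using that \<open>n \<ge> 2\<close>
      by (simp add: degree_mult_eq S_def) arith
  qed
  obtain \<beta> where \<beta>: "degree \<beta> \<le> 2 * (N - p)" "\<forall>j\<in>S. coeff (reflect_poly (G j)) (N - p) = poly \<beta> (of_nat j)"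
    using gG unfolding good_def pf_def by blast
  show ?thesis
  proof (intro exI[of _ \<beta>] conjI allI impI)
    show "degree \<beta> \<le> 2 * (2*n + m div 2 - 3 - p)" using \<beta>(1) unfolding N_def M_def .
    fix j assume j: "1 \<le> j \<and> j \<le> n - 1"
    then have jS: "j \<in> S" unfolding S_def by simp
    have "pochhammer [:of_nat m + 1, 2:] j
                     * pochhammer [:2 - of_nat j, 1:] (m div 2 + j - 1)
                     * pochhammer [:of_nat m + 2 * of_nat j + 1, 1:] (2*n - 2*j - 2) = smult (2 ^ j) (G j)"
      unfolding P1 M_def[symmetric] P2[OF jS] P3[OF jS] G_def by simp
    moreover have "coeff (G j) p = coeff (reflect_poly (G j)) (N - p)"
    proof -
      have "N - (N - p) = p" "\<not> N - p > N" using assms(2) unfolding N_def M_def by auto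
      then show ?thesis using degG[OF jS] by (simp add: coeff_reflect_poly)
    qed
    ultimately show "coeff (pochhammer [:of_nat m + 1, 2:] j
                     * pochhammer [:2 - of_nat j, 1:] (m div 2 + j - 1)
                     * pochhammer [:of_nat m + 2 * of_nat j + 1, 1:] (2*n - 2*j - 2)) p
              = 2 ^ j * poly \<beta> (of_nat j)"
      using \<beta>(2) jS by simp
  qed
qed

end
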